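(* Let $A$ be a strongly AUF algebra, let $G$ be a projective generator of $\mathrm{Coh}_{\mathrm L}(A)$, and let $B=\mathrm{End}_{A,-}(G)^{\mathrm{op}}$, so that $G$ is an $A$-$B$ bimodule. Then the map $A\to\mathrm{End}^0_{-,B}(G)$ sending each $a\in A$ to the operator of left multiplication by $a$ on $G$ is a linear isomorphism.
   Context: All algebras are associative $\mathbb C$-algebras, not necessarily unital. An idempotent is $e$ with $e^2=e$. An algebra $A$ is AUF if there is a family $(e_i)_{i\in\mathfrak I}$ of mutually orthogonal idempotents with $\dim e_iAe_j<\infty$ and $A=\sum_{i,j}e_iAe_j$. A left $A$-module $M$ is quasicoherent if $\xi\in A\xi$ for all $\xi\in M$, coherent if moreover finitely generated; $\mathrm{Coh}_{\mathrm L}(A)$ is the category of coherent left $A$-modules. Irreducible means nonzero with no nonzero proper submodules. An idempotent $e$ is generating if every irreducible quasicoherent left $A$-module is a quotient of $Ae$; $A$ is strongly AUF if it is AUF and has a generating idempotent. A projective generator of $\mathrm{Coh}_{\mathrm L}(A)$ is an object projective as a left $A$-module such that every object of $\mathrm{Coh}_{\mathrm L}(A)$ is a quotient of a finite direct sum of copies of it. $B=\mathrm{End}_{A,-}(G)^{\mathrm{op}}$ acts on the right of $G$ by $\xi\cdot T=T(\xi)$. For a quasicoherent left $A$-module $M$: $M^\vee$ is the space of linear functionals $\varphi$ on $M$ for which there is an idempotent $e\in A$ with $\varphi(e\eta)=\varphi(\eta)$ for all $\eta\in M$; $\mathrm{End}^0(M)\subset\mathrm{End}(M)$ is the span of the operators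 $\eta\mapsto\varphi(\eta)\xi$ with $\xi\in M$, $\varphi\in M^\vee$; if $M$ carries a right action of an algebra $B$ commuting with $A$, $\mathrm{End}^0_{-,B}(M)=\{T\in\mathrm{End}^0(M):T(\xi b)=T(\xi)b\ \forall\xi,b\}$. *)

theory Defs
  imports Complex_Main
begin

text \<open>
  The algebra A is the whole of a type 'a of class ring (associative, not
  necessarily unital), together with a complex scalar multiplication asc
  making it a complex algebra.  Modules are given by explicit carriers
  inside some ambient type 'm, with their own complex vector space
  structure and a left A-action.
\<close>

definition is_calg :: "(complex \<Rightarrow> 'a::ring \<Rightarrow> 'a) \<Rightarrow> bool" where
  "is_calg asc \<longleftrightarrow> vector_space asc \<and>
     (\<forall>c a b. asc c (a * b) = asc c a * b \<and> asc c (a * b) = a * asc c b)"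

record 'm vsp =
  vcarrier :: "'m set"
  vadd :: "'m \<Rightarrow> 'm \<Rightarrow> 'm"
  vzero :: 'm
  vsc :: "complex \<Rightarrow> 'm \<Rightarrow> 'm"

record ('a, 'm) lmod = "'m vsp" +
  lact :: "'a \<Rightarrow> 'm \<Rightarrow> 'm"

definition cvs :: "('m, 'z) vsp_scheme \<Rightarrow> bool" where
  "cvs V \<longleftrightarrow>
     vzero V \<in> vcarrier V \<and>
     (\<forall>x\<in>vcarrier V. \<forall>y\<in>vcarrier V. vadd V x y \<in> vcarrier V) \<and>
     (\<forall>c. \<forall>x\<in>vcarrier V. vsc V c x \<in> vcarrier V) \<and>
     (\<forall>x\<in>vcarrier V. \<forall>y\<in>vcarrier V. \<forall>z\<in>vcarrier V.
        vadd V (vadd V x y) z = vadd V x (vadd V y z)) \<and>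
     (\<forall>x\<in>vcarrier V. \<forall>y\<in>vcarrier V. vadd V x y = vadd V y x) \<and>
     (\<forall>x\<in>vcarrier V. vadd V (vzero V) x = x) \<and>
     (\<forall>x\<in>vcarrier V. \<exists>y\<in>vcarrier V. vadd V x y = vzero V) \<and>
     (\<forall>c. \<forall>x\<in>vcarrier V. \<forall>y\<in>vcarrier V.
        vsc V c (vadd V x y) = vadd V (vsc V c x) (vsc V c y)) \<and>
     (\<forall>c d. \<forall>x\<in>vcarrier V. vsc V (c + d) x = vadd V (vsc V c x) (vsc V d x)) \<and>
     (\<forall>c d. \<forall>x\<in>vcarrier V. vsc V c (vsc V d x) = vsc V (c * d) x) \<and>
     (\<forall>x\<in>vcarrier V. vsc V 1 x = x)"

definition lmodule :: "(complex \<Rightarrow> 'a::ring \<Rightarrow> 'a) \<Rightarrow> ('a, 'm) lmod \<Rightarrow> bool" where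
  "lmodule asc M \<longleftrightarrow> cvs M \<and>
     (\<forall>a. \<forall>x\<in>vcarrier M. lact M a x \<in> vcarrier M) \<and>
     (\<forall>a. \<forall>x\<in>vcarrier M. \<forall>y\<in>vcarrier M.
        lact M a (vadd M x y) = vadd M (lact M a x) (lact M a y)) \<and>
     (\<forall>a b. \<forall>x\<in>vcarrier M. lact M (a + b) x = vadd M (lact M a x) (lact M b x)) \<and>
     (\<forall>a b. \<forall>x\<in>vcarrier M. lact M (a * b) x = lact M a (lact M b x)) \<and>
     (\<forall>c a. \<forall>x\<in>vcarrier M. lact M (asc c a) x = vsc M c (lact M a x)) \<and>
     (\<forall>c a. \<forall>x\<in>vcarrier M. lact M a (vsc M c x) = vsc M c (lact M a x))"

definition submodule :: "('a, 'm) lmod \<Rightarrow> 'm set \<Rightarrow> bool" where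
  "submodule M N \<longleftrightarrow> N \<subseteq> vcarrier M \<and> vzero M \<in> N \<and>
     (\<forall>x\<in>N. \<forall>y\<in>N. vadd M x y \<in> N) \<and> (\<forall>c. \<forall>x\<in>N. vsc M c x \<in> N) \<and>
     (\<forall>a. \<forall>x\<in>N. lact M a x \<in> N)"

definition irreducible_mod :: "('a, 'm) lmod \<Rightarrow> bool" where
  "irreducible_mod M \<longleftrightarrow> vcarrier M \<noteq> {vzero M} \<and>
     (\<forall>N. submodule M N \<longrightarrow> N = {vzero M} \<or> N = vcarrier M)"

definition quasicoherent :: "('a, 'm) lmod \<Rightarrow> bool" where
  "quasicoherent M \<longleftrightarrow> (\<forall>x\<in>vcarrier M. \<exists>a. lact M a x = x)"

definition fin_gen :: "('a, 'm) lmod \<Rightarrow> bool" where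
  "fin_gen M \<longleftrightarrow> (\<exists>S. finite S \<and> S \<subseteq> vcarrier M \<and>
     (\<forall>N. submodule M N \<and> S \<subseteq> N \<longrightarrow> N = vcarrier M))"

definition coherent :: "('a, 'm) lmod \<Rightarrow> bool" where
  "coherent M \<longleftrightarrow> quasicoherent M \<and> fin_gen M"

definition lhom :: "('a, 'm) lmod \<Rightarrow> ('a, 'n) lmod \<Rightarrow> ('m \<Rightarrow> 'n) \<Rightarrow> bool" where
  "lhom M N f \<longleftrightarrow> (\<forall>x\<in>vcarrier M. f x \<in> vcarrier N) \<and>
     (\<forall>x\<in>vcarrier M. \<forall>y\<in>vcarrier M. f (vadd M x y) = vadd N (f x) (f y)) \<and>
     (\<forall>c. \<forall>x\<in>vcarrier M. f (vsc M c x) = vsc N c (f x)) \<and>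
     (\<forall>a. \<forall>x\<in>vcarrier M. f (lact M a x) = lact N a (f x))"

definition is_quotient_of :: "('a, 'm) lmod \<Rightarrow> ('a, 'n) lmod \<Rightarrow> bool" where
  "is_quotient_of M N \<longleftrightarrow> (\<exists>f. lhom N M f \<and> f ` vcarrier N = vcarrier M)"

definition mod_Ae :: "(complex \<Rightarrow> 'a::ring \<Rightarrow> 'a) \<Rightarrow> 'a \<Rightarrow> ('a, 'a) lmod" where
  "mod_Ae asc e = \<lparr>vcarrier = {a * e |a. True}, vadd = (+), vzero = 0, vsc = asc,
                   lact = (*)\<rparr>"

definition dsum_pow :: "('a, 'g) lmod \<Rightarrow> nat \<Rightarrow> ('a, nat \<Rightarrow> 'g) lmod" where
  "dsum_pow G n = \<lparr>vcarrier = {f. (\<forall>i<n. f i \<in> vcarrier G) \<and> (\<forall>i\<ge>n. f i = vzero G)},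
     vadd = (\<lambda>f g i. vadd G (f i) (g i)), vzero = (\<lambda>i. vzero G),
     vsc = (\<lambda>c f i. vsc G c (f i)), lact = (\<lambda>a f i. lact G a (f i))\<rparr>"

definition idem :: "'a::ring \<Rightarrow> bool" where
  "idem e \<longleftrightarrow> e * e = e"

definition AUF :: "(complex \<Rightarrow> 'a::ring \<Rightarrow> 'a) \<Rightarrow> bool" where
  "AUF asc \<longleftrightarrow> (\<exists>(I::'a set) (e::'a \<Rightarrow> 'a).
     (\<forall>i\<in>I. idem (e i)) \<and>
     (\<forall>i\<in>I. \<forall>j\<in>I. i \<noteq> j \<longrightarrow> e i * e j = 0) \<and>
     (\<forall>i\<in>I. \<forall>j\<in>I. \<exists>B. finite B \<and>
          {e i * a * e j |a. True} \<subseteq> module.span asc B) \<and>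
     (\<forall>a. \<exists>F x. finite F \<and> F \<subseteq> I \<times> I \<and>
          a = (\<Sum>(i, j)\<in>F. e i * x (i, j) * e j)))"

text \<open>Quantification over all irreducible
  quasicoherent modules is over modules with carrier in 'a set; every
  irreducible quasicoherent module is isomorphic to one of these
  (it is cyclic, hence of the form A/ann).\<close>
definition generating_idem :: "(complex \<Rightarrow> 'a::ring \<Rightarrow> 'a) \<Rightarrow> 'a \<Rightarrow> bool" where
  "generating_idem asc e \<longleftrightarrow> idem e \<and>
     (\<forall>M :: ('a, 'a set) lmod. lmodule asc M \<and> quasicoherent M \<and> irreducible_mod M
        \<longrightarrow> is_quotient_of M (mod_Ae asc e))"

definition strongly_AUF :: "(complex \<Rightarrow> 'a::ring \<Rightarrow> 'a) \<Rightarrow> bool" where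
  "strongly_AUF asc \<longleftrightarrow> AUF asc \<and> (\<exists>e. generating_idem asc e)"

text \<open>Projective left A-module: lifting property along surjective
  homomorphisms, tested on modules with carrier in the type
  'g \<Rightarrow> complex \<times> 'a (large enough to contain G and a free module
  over the unitisation on the elements of G).\<close>
definition projective_mod :: "(complex \<Rightarrow> 'a::ring \<Rightarrow> 'a) \<Rightarrow> ('a, 'g) lmod \<Rightarrow> bool" where
  "projective_mod asc P \<longleftrightarrow>
     (\<forall>(N :: ('a, 'g \<Rightarrow> complex \<times> 'a) lmod) (N' :: ('a, 'g \<Rightarrow> complex \<times> 'a) lmod) p f.
        lmodule asc N \<and> lmodule asc N' \<and> lhom N N' p \<and> p ` vcarrier N = vcarrier N' \<and>
        lhom P N' f \<longrightarrow>
        (\<exists>h. lhom P N h \<and> (\<forall>x\<in>vcarrier P. p (h x) = f x)))"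

text \<open>Projective generator of Coh_L(A).  Coherent modules are tested with
  carriers in (nat \<Rightarrow> 'a) set; every coherent module is isomorphic to one
  of these (a quotient of A^n).\<close>
definition proj_generator :: "(complex \<Rightarrow> 'a::ring \<Rightarrow> 'a) \<Rightarrow> ('a, 'g) lmod \<Rightarrow> bool" where
  "proj_generator asc G \<longleftrightarrow> lmodule asc G \<and> coherent G \<and> projective_mod asc G \<and>
     (\<forall>M :: ('a, (nat \<Rightarrow> 'a) set) lmod. lmodule asc M \<and> coherent M \<longrightarrow>
        (\<exists>n. is_quotient_of M (dsum_pow G n)))"

definition dual0 :: "('a::ring, 'm) lmod \<Rightarrow> ('m \<Rightarrow> complex) set" where
  "dual0 M = {\<phi>. (\<forall>x\<in>vcarrier M. \<forall>y\<in>vcarrier M. \<phi> (vadd M x y) = \<phi> x + \<phi> y) \<and>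
                 (\<forall>c. \<forall>x\<in>vcarrier M. \<phi> (vsc M c x) = c * \<phi> x) \<and>
                 (\<exists>e. idem e \<and> (\<forall>y\<in>vcarrier M. \<phi> (lact M e y) = \<phi> y))}"

definition vsum_list :: "('a, 'm) lmod \<Rightarrow> 'm list \<Rightarrow> 'm" where
  "vsum_list M xs = foldr (vadd M) xs (vzero M)"

text \<open>End^0(M): span of the rank-one operators \<eta> \<mapsto> \<phi>(\<eta>)\<xi>
  (operators are compared on the carrier; scalars are absorbed into \<xi>).\<close>
definition End0 :: "('a::ring, 'm) lmod \<Rightarrow> ('m \<Rightarrow> 'm) set" where
  "End0 M = {T. \<exists>cs :: (complex \<times> ('m \<Rightarrow> complex) \<times> 'm) list.
       (\<forall>(c, \<phi>, \<xi>)\<in>set cs. \<phi> \<in> dual0 M \<and> \<xi> \<in> vcarrier M) \<and>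
       (\<forall>y\<in>vcarrier M. T y = vsum_list M (map (\<lambda>(c, \<phi>, \<xi>). vsc M (c * \<phi> y) \<xi>) cs))}"

text \<open>End^0_{-,B}(G) with B = End_{A,-}(G)^op acting on the right by
  \<xi>\<cdot>b = b(\<xi>): the elements of End0 commuting with all A-endomorphisms.\<close>
definition End0_B :: "('a::ring, 'm) lmod \<Rightarrow> ('m \<Rightarrow> 'm) set" where
  "End0_B M = {T \<in> End0 M. \<forall>b. lhom M M b \<longrightarrow> (\<forall>x\<in>vcarrier M. T (b x) = b (T x))}"

end

theory Submission
  imports Defs "HOL-Library.Function_Algebras"
begin

lemma cvsD_1: assumes "cvs V" shows "vzero V \<in> vcarrier V"
  using assms unfolding cvs_def by (elim conjE) assumption

lemma cvsD_2: assumes "cvs V" "x \<in> vcarrier V" "y \<in> vcarrier V" shows "vadd V x y \<in> vcarrier V"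
proof -
  have "\<forall>x\<in>vcarrier V. \<forall>y\<in>vcarrier V. vadd V x y \<in> vcarrier V" using assms(1) unfolding cvs_def by (elim conjE) assumption
  then show ?thesis using assms(2-) by blast
qed

lemma cvsD_3: assumes "cvs V" "x \<in> vcarrier V" shows "vsc V c x \<in> vcarrier V"
proof -
  have "\<forall>c. \<forall>x\<in>vcarrier V. vsc V c x \<in> vcarrier V" using assms(1) unfolding cvs_def by (elim conjE) assumption
  then show ?thesis using assms(2-) by blast
qed

lemma cvsD_4: assumes "cvs V" "x \<in> vcarrier V" "y \<in> vcarrier V" "z \<in> vcarrier V" shows "vadd V (vadd V x y) z = vadd V x (vadd V y z)"
proof -
  have "\<forall>x\<in>vcarrier V. \<forall>y\<in>vcarrier V. \<forall>z\<in>vcarrier V. vadd V (vadd V x y) z = vadd V x (vadd V y z)" using assms(1) unfolding cvs_def by (elim conjE) assumption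
  then show ?thesis using assms(2-) by blast
qed

lemma cvsD_5: assumes "cvs V" "x \<in> vcarrier V" "y \<in> vcarrier V" shows "vadd V x y = vadd V y x"
proof -
  have "\<forall>x\<in>vcarrier V. \<forall>y\<in>vcarrier V. vadd V x y = vadd V y x" using assms(1) unfolding cvs_def by (elim conjE) assumption
  then show ?thesis using assms(2-) by blast
qed

lemma cvsD_6: assumes "cvs V" "x \<in> vcarrier V" shows "vadd V (vzero V) x = x"
proof -
  have "\<forall>x\<in>vcarrier V. vadd V (vzero V) x = x" using assms(1) unfolding cvs_def by (elim conjE) assumption
  then show ?thesis using assms(2-) by blast
qed

lemma cvsD_7: assumes "cvs V" "x \<in> vcarrier V" shows "\<exists>y\<in>vcarrier V. vadd V x y = vzero V"
proof -
  have "\<forall>x\<in>vcarrier V. \<exists>y\<in>vcarrier V. vadd V x y = vzero V" using assms(1) unfolding cvs_def by (elim conjE) assumption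
  then show ?thesis using assms(2-) by blast
qed

lemma cvsD_8: assumes "cvs V" "x \<in> vcarrier V" "y \<in> vcarrier V" shows "vsc V c (vadd V x y) = vadd V (vsc V c x) (vsc V c y)"
proof -
  have "\<forall>c. \<forall>x\<in>vcarrier V. \<forall>y\<in>vcarrier V. vsc V c (vadd V x y) = vadd V (vsc V c x) (vsc V c y)" using assms(1) unfolding cvs_def by (elim conjE) assumption
  then show ?thesis using assms(2-) by blast
qed

lemma cvsD_9: assumes "cvs V" "x \<in> vcarrier V" shows "vsc V (c + d) x = vadd V (vsc V c x) (vsc V d x)"
proof -
  have "\<forall>c d. \<forall>x\<in>vcarrier V. vsc V (c + d) x = vadd V (vsc V c x) (vsc V d x)" using assms(1) unfolding cvs_def by (elim conjE) assumption
  then show ?thesis using assms(2-) by blast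
qed

lemma cvsD_10: assumes "cvs V" "x \<in> vcarrier V" shows "vsc V c (vsc V d x) = vsc V (c * d) x"
proof -
  have "\<forall>c d. \<forall>x\<in>vcarrier V. vsc V c (vsc V d x) = vsc V (c * d) x" using assms(1) unfolding cvs_def by (elim conjE) assumption
  then show ?thesis using assms(2-) by blast
qed

lemma cvsD_11: assumes "cvs V" "x \<in> vcarrier V" shows "vsc V 1 x = x"
proof -
  have "\<forall>x\<in>vcarrier V. vsc V 1 x = x" using assms(1) unfolding cvs_def by (elim conjE) assumption
  then show ?thesis using assms(2-) by blast
qed

lemmas cvsD = cvsD_1 cvsD_2 cvsD_3 cvsD_4 cvsD_5 cvsD_6 cvsD_7 cvsD_8 cvsD_9 cvsD_10 cvsD_11

lemma lmoduleD_1: assumes "lmodule asc M" shows "cvs M"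
  using assms unfolding lmodule_def by (elim conjE) assumption

lemma lmoduleD_2: assumes "lmodule asc M" "x\<in>vcarrier M" shows "lact M a x \<in> vcarrier M"
proof -
  have "\<forall>a. \<forall>x\<in>vcarrier M. lact M a x \<in> vcarrier M" using assms(1) unfolding lmodule_def by (elim conjE) assumption
  then show ?thesis using assms(2-) by blast
qed

lemma lmoduleD_3: assumes "lmodule asc M" "x\<in>vcarrier M" "y\<in>vcarrier M" shows "lact M a (vadd M x y) = vadd M (lact M a x) (lact M a y)"
proof -
  have "\<forall>a. \<forall>x\<in>vcarrier M. \<forall>y\<in>vcarrier M. lact M a (vadd M x y) = vadd M (lact M a x) (lact M a y)" using assms(1) unfolding lmodule_def by (elim conjE) assumption
  then show ?thesis using assms(2-) by blast
qed

lemma lmoduleD_4: assumes "lmodule asc M" "x\<in>vcarrier M" shows "lact M (a + b) x = vadd M (lact M a x) (lact M b x)"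
proof -
  have "\<forall>a b. \<forall>x\<in>vcarrier M. lact M (a + b) x = vadd M (lact M a x) (lact M b x)" using assms(1) unfolding lmodule_def by (elim conjE) assumption
  then show ?thesis using assms(2-) by blast
qed

lemma lmoduleD_5: assumes "lmodule asc M" "x\<in>vcarrier M" shows "lact M (a * b) x = lact M a (lact M b x)"
proof -
  have "\<forall>a b. \<forall>x\<in>vcarrier M. lact M (a * b) x = lact M a (lact M b x)" using assms(1) unfolding lmodule_def by (elim conjE) assumption
  then show ?thesis using assms(2-) by blast
qed

lemma lmoduleD_6: assumes "lmodule asc M" "x\<in>vcarrier M" shows "lact M (asc c a) x = vsc M c (lact M a x)"
proof -
  have "\<forall>c a. \<forall>x\<in>vcarrier M. lact M (asc c a) x = vsc M c (lact M a x)" using assms(1) unfolding lmodule_def by (elim conjE) assumption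
  then show ?thesis using assms(2-) by blast
qed

lemma lmoduleD_7: assumes "lmodule asc M" "x\<in>vcarrier M" shows "lact M a (vsc M c x) = vsc M c (lact M a x)"
proof -
  have "\<forall>c a. \<forall>x\<in>vcarrier M. lact M a (vsc M c x) = vsc M c (lact M a x)" using assms(1) unfolding lmodule_def by (elim conjE) assumption
  then show ?thesis using assms(2-) by blast
qed

lemmas lmoduleD = lmoduleD_1 lmoduleD_2 lmoduleD_3 lmoduleD_4 lmoduleD_5 lmoduleD_6 lmoduleD_7

lemma lhomD_1: assumes "lhom M N f" "x\<in>vcarrier M" shows "f x \<in> vcarrier N"
proof -
  have "\<forall>x\<in>vcarrier M. f x \<in> vcarrier N" using assms(1) unfolding lhom_def by (elim conjE) assumption
  then show ?thesis using assms(2-) by blast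
qed

lemma lhomD_2: assumes "lhom M N f" "x\<in>vcarrier M" "y\<in>vcarrier M" shows "f (vadd M x y) = vadd N (f x) (f y)"
proof -
  have "\<forall>x\<in>vcarrier M. \<forall>y\<in>vcarrier M. f (vadd M x y) = vadd N (f x) (f y)" using assms(1) unfolding lhom_def by (elim conjE) assumption
  then show ?thesis using assms(2-) by blast
qed

lemma lhomD_3: assumes "lhom M N f" "x\<in>vcarrier M" shows "f (vsc M c x) = vsc N c (f x)"
proof -
  have "\<forall>c. \<forall>x\<in>vcarrier M. f (vsc M c x) = vsc N c (f x)" using assms(1) unfolding lhom_def by (elim conjE) assumption
  then show ?thesis using assms(2-) by blast
qed

lemma lhomD_4: assumes "lhom M N f" "x\<in>vcarrier M" shows "f (lact M a x) = lact N a (f x)"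
proof -
  have "\<forall>a. \<forall>x\<in>vcarrier M. f (lact M a x) = lact N a (f x)" using assms(1) unfolding lhom_def by (elim conjE) assumption
  then show ?thesis using assms(2-) by blast
qed

lemmas lhomD = lhomD_1 lhomD_2 lhomD_3 lhomD_4


lemma cvs_zero_right: "cvs V \<Longrightarrow> x \<in> vcarrier V \<Longrightarrow> vadd V x (vzero V) = x"
  by (metis cvsD(1,5,6))

lemma cvs_cancel:
  assumes V: "cvs V" and x: "x \<in> vcarrier V" and e: "vadd V x x = x"
  shows "x = vzero V"
proof -
  obtain y where y: "y \<in> vcarrier V" "vadd V x y = vzero V" using cvsD(7)[OF V x] by blast
  have "vadd V (vadd V x x) y = vadd V x (vadd V x y)" using cvsD(4)[OF V x x y(1)] .
  then show ?thesis using e y cvs_zero_right[OF V x] by simp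
qed

lemma cvs_swap4:
  assumes V: "cvs V" and "a \<in> vcarrier V" "b \<in> vcarrier V" "c \<in> vcarrier V" "d \<in> vcarrier V"
  shows "vadd V (vadd V a b) (vadd V c d) = vadd V (vadd V a c) (vadd V b d)"
proof -
  have "vadd V (vadd V a b) (vadd V c d) = vadd V a (vadd V b (vadd V c d))"
    using assms by (simp add: cvsD)
  also have "vadd V b (vadd V c d) = vadd V c (vadd V b d)"
    using assms by (metis cvsD(2,4,5))
  also have "vadd V a (vadd V c (vadd V b d)) = vadd V (vadd V a c) (vadd V b d)"
    using assms by (simp add: cvsD)
  finally show ?thesis .
qed

lemma cvs_sc_zero: assumes V: "cvs V" shows "vsc V c (vzero V) = vzero V"
proof -
  have "vsc V c (vzero V) = vsc V c (vadd V (vzero V) (vzero V))" using cvsD(1,6)[OF V] by simp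
  also have "\<dots> = vadd V (vsc V c (vzero V)) (vsc V c (vzero V))" using cvsD(1,8)[OF V] by simp
  finally show ?thesis using cvs_cancel[OF V] cvsD(1,3)[OF V] by metis
qed

lemma vsum_closed: "cvs V \<Longrightarrow> set xs \<subseteq> vcarrier V \<Longrightarrow> vsum_list V xs \<in> vcarrier V"
  by (induction xs) (auto simp: vsum_list_def cvsD)

lemma vsum_map_add:
  assumes V: "cvs V" and "\<forall>x\<in>set xs. f x \<in> vcarrier V \<and> g x \<in> vcarrier V"
  shows "vsum_list V (map (\<lambda>x. vadd V (f x) (g x)) xs) =
         vadd V (vsum_list V (map f xs)) (vsum_list V (map g xs))"
  using assms(2)
proof (induction xs)
  case Nil then show ?case using V by (simp add: vsum_list_def cvsD)
next
  case (Cons a xs)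
  have c1: "vsum_list V (map f xs) \<in> vcarrier V" "vsum_list V (map g xs) \<in> vcarrier V"
    using Cons.prems by (auto intro!: vsum_closed[OF V])
  show ?case using Cons c1 cvs_swap4[OF V, of "f a" "g a" "vsum_list V (map f xs)" "vsum_list V (map g xs)"]
    by (simp add: vsum_list_def)
qed

lemma vsum_map_zero: "cvs V \<Longrightarrow> vsum_list V (map (\<lambda>x. vzero V) xs) = vzero V"
  by (induction xs) (auto simp: vsum_list_def cvsD)

lemma vsum_map_sc:
  assumes V: "cvs V" and "set xs \<subseteq> vcarrier V"
  shows "vsc V c (vsum_list V xs) = vsum_list V (map (vsc V c) xs)"
  using assms(2)
proof (induction xs)
  case Nil then show ?case using V by (simp add: vsum_list_def cvs_sc_zero)
next
  case (Cons a xs)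
  then show ?case using vsum_closed[OF V, of xs] V by (simp add: vsum_list_def cvsD)
qed

lemma vsum_single:
  assumes V: "cvs V" and "distinct xs" "x0 \<in> set xs" "F x0 \<in> vcarrier V"
  shows "vsum_list V (map (\<lambda>x. if x = x0 then F x else vzero V) xs) = F x0"
  using assms(2,3)
proof (induction xs)
  case Nil then show ?case by simp
next
  case (Cons a xs)
  show ?case
  proof (cases "a = x0")
    case True
    then have "x0 \<notin> set xs" using Cons by auto
    then have "map (\<lambda>x. if x = x0 then F x else vzero V) xs = map (\<lambda>x. vzero V) xs" by auto
    then show ?thesis using True vsum_map_zero[OF V, of xs] cvs_zero_right[OF V assms(4)]
      by (simp add: vsum_list_def del: map_eq_conv)
  next
    case False
    then show ?thesis using Cons V assms(4) by (simp add: vsum_list_def cvsD)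
  qed
qed


lemma lact_zero_vec: assumes M: "lmodule asc M" shows "lact M a (vzero M) = vzero M"
proof -
  note V = lmoduleD(1)[OF M]
  have "lact M a (vzero M) = lact M a (vadd M (vzero M) (vzero M))" using cvsD(1,6)[OF V] by simp
  also have "\<dots> = vadd M (lact M a (vzero M)) (lact M a (vzero M))" using cvsD(1)[OF V] lmoduleD(3)[OF M] by simp
  finally show ?thesis using cvs_cancel[OF V] cvsD(1)[OF V] lmoduleD(2)[OF M] by metis
qed

lemma lact_zero_ring: assumes M: "lmodule asc M" and x: "x \<in> vcarrier M" shows "lact M 0 x = vzero M"
proof -
  note V = lmoduleD(1)[OF M]
  have "lact M 0 x = vadd M (lact M 0 x) (lact M 0 x)" using lmoduleD(4)[OF M x, of 0 0] by simp
  then show ?thesis using cvs_cancel[OF V] lmoduleD(2)[OF M x] by metis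
qed

lemma vsum_map_lact:
  assumes M: "lmodule asc M" and "set xs \<subseteq> vcarrier M"
  shows "lact M a (vsum_list M xs) = vsum_list M (map (lact M a) xs)"
  using assms(2)
proof (induction xs)
  case Nil then show ?case using M by (simp add: vsum_list_def lact_zero_vec)
next
  case (Cons b xs)
  then show ?case using vsum_closed[OF lmoduleD(1)[OF M], of xs] lmoduleD(3)[OF M] by (simp add: vsum_list_def)
qed


lemma lhom_zero:
  assumes "cvs M" "cvs N" "lhom M N f" shows "f (vzero M) = vzero N"
proof -
  have "f (vzero M) = f (vadd M (vzero M) (vzero M))" using cvsD(1,6)[OF assms(1)] by simp
  also have "\<dots> = vadd N (f (vzero M)) (f (vzero M))" using lhomD(2)[OF assms(3)] cvsD(1)[OF assms(1)] by simp
  finally show ?thesis using cvs_cancel[OF assms(2)] lhomD(1)[OF assms(3)] cvsD(1)[OF assms(1)] by metis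
qed

lemma lhom_vsum:
  assumes "cvs M" "cvs N" "lhom M N f" "set xs \<subseteq> vcarrier M"
  shows "f (vsum_list M xs) = vsum_list N (map f xs)"
  using assms(4)
proof (induction xs)
  case Nil then show ?case using lhom_zero[OF assms(1-3)] by (simp add: vsum_list_def)
next
  case (Cons b xs)
  then show ?case using vsum_closed[OF assms(1), of xs] lhomD(2)[OF assms(3)] by (simp add: vsum_list_def)
qed

lemma calg_vs:
  assumes "is_calg asc"
  shows "vector_space asc"
    and "asc c (x + y) = asc c x + asc c y"
    and "asc (c + d) x = asc c x + asc d x"
    and "asc c (asc d x) = asc (c * d) x"
    and "asc 1 x = x"
    and "asc c (a * b) = asc c a * b"
    and "asc c (a * b) = a * asc c b"
proof -
  have vs: "vector_space asc" using assms unfolding is_calg_def by blast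
  show "vector_space asc" by (fact vs)
  show "asc c (x + y) = asc c x + asc c y" "asc (c + d) x = asc c x + asc d x"
    "asc c (asc d x) = asc (c * d) x" "asc 1 x = x"
    using vector_space.vector_space_assms[OF vs] by blast+
  show "asc c (a * b) = asc c a * b" "asc c (a * b) = a * asc c b"
    using assms unfolding is_calg_def by blast+
qed

definition emb :: "'a \<Rightarrow> (nat \<Rightarrow> 'a) set" where "emb x = {\<lambda>_. x}"
definition unemb :: "(nat \<Rightarrow> 'a) set \<Rightarrow> 'a" where "unemb X = (SOME g. g \<in> X) 0"

lemma unemb_emb[simp]: "unemb (emb x) = x"
  unfolding emb_def unemb_def by simp

lemma emb_inj[simp]: "emb x = emb y \<longleftrightarrow> x = y"
  unfolding emb_def by (metis singleton_inject)

definition Mf :: "(complex \<Rightarrow> 'a::ring \<Rightarrow> 'a) \<Rightarrow> 'a \<Rightarrow> ('a, (nat \<Rightarrow> 'a) set) lmod" where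
  "Mf asc f = \<lparr>vcarrier = emb ` {c * f |c. True}, vadd = \<lambda>X Y. emb (unemb X + unemb Y),
     vzero = emb 0, vsc = \<lambda>c X. emb (asc c (unemb X)), lact = \<lambda>a X. emb (a * unemb X)\<rparr>"

lemma Mf_simps[simp]:
  "vcarrier (Mf asc f) = emb ` {c * f |c. True}"
  "vadd (Mf asc f) X Y = emb (unemb X + unemb Y)"
  "vzero (Mf asc f) = emb 0"
  "vsc (Mf asc f) s X = emb (asc s (unemb X))"
  "lact (Mf asc f) a X = emb (a * unemb X)"
  by (simp_all add: Mf_def)

lemma Mf_lmodule:
  assumes A: "is_calg asc"
  shows "lmodule asc (Mf asc f)"
proof -
  let ?P = "{c * f |c. True}"
  have P0: "0 \<in> ?P" by (rule CollectI, rule exI[of _ 0]) simp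
  have Padd: "x + y \<in> ?P" if "x \<in> ?P" "y \<in> ?P" for x y
    using that by (auto simp: distrib_right[symmetric])
  have Psc: "asc s x \<in> ?P" if "x \<in> ?P" for x s
    using that calg_vs(6)[OF A] by auto
  have Pneg: "- x \<in> ?P" if "x \<in> ?P" for x
    using that by (auto intro: exI[of _ "- _"])
  have Pmul: "a * x \<in> ?P" if "x \<in> ?P" for x a
    using that by (auto simp: mult.assoc[symmetric])
  have Pinv: "\<exists>y. (\<exists>c. y = c * f) \<and> x + y = 0" if "x \<in> ?P" for x
    using Pneg[OF that] by (intro exI[of _ "- x"]) auto
  have cvs: "cvs (Mf asc f)"
    unfolding cvs_def
    apply (simp, intro conjI)
    using P0 Padd Psc Pinv by (auto simp: calg_vs[OF A] add.assoc)
  have e1: "a * (asc c ca * f) = asc c a * (ca * f)" for a c ca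
    by (metis calg_vs(6,7)[OF A] mult.assoc)
  have e2: "emb (a * (c * f)) \<in> emb ` ?P" for a c
    using Pmul[of "c * f" a] by blast
  show ?thesis unfolding lmodule_def using cvs e1 e2
    by (auto simp: mult.assoc distrib_left distrib_right calg_vs[OF A])
qed

definition auf_data :: "(complex \<Rightarrow> 'a::ring \<Rightarrow> 'a) \<Rightarrow> 'a set \<Rightarrow> ('a \<Rightarrow> 'a) \<Rightarrow> bool" where
  "auf_data asc I e \<longleftrightarrow>
     (\<forall>i\<in>I. idem (e i)) \<and>
     (\<forall>i\<in>I. \<forall>j\<in>I. i \<noteq> j \<longrightarrow> e i * e j = 0) \<and>
     (\<forall>i\<in>I. \<forall>j\<in>I. \<exists>B. finite B \<and>
          {e i * a * e j |a. True} \<subseteq> module.span asc B) \<and>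
     (\<forall>a. \<exists>F x. finite F \<and> F \<subseteq> I \<times> I \<and>
          a = (\<Sum>(i, j)\<in>F. e i * x (i, j) * e j))"

lemma AUF_iff: "AUF asc \<longleftrightarrow> (\<exists>I e. auf_data asc I e)"
  unfolding AUF_def auf_data_def by blast

definition esum :: "('a \<Rightarrow> 'a::ring) \<Rightarrow> 'a set \<Rightarrow> 'a" where
  "esum e J = (\<Sum>j\<in>J. e j)"

lemma esum_mult:
  assumes D: "auf_data asc I e" and J: "finite J" "J \<subseteq> I" "j \<in> J"
  shows "esum e J * e j = e j" "e j * esum e J = e j"
proof -
  have id: "\<forall>i\<in>I. e i * e i = e i" and orth: "\<forall>i\<in>I. \<forall>k\<in>I. i \<noteq> k \<longrightarrow> e i * e k = 0"
    using D unfolding auf_data_def idem_def by blast+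
  have jI: "j \<in> I" using J by blast
  have "esum e J * e j = (\<Sum>k\<in>J. e k * e j)" unfolding esum_def by (simp add: sum_distrib_right)
  also have "\<dots> = e j * e j + (\<Sum>k\<in>J - {j}. e k * e j)" using J by (simp add: sum.remove)
  also have "(\<Sum>k\<in>J - {j}. e k * e j) = 0"
  proof (rule sum.neutral, rule ballI)
    fix k assume "k \<in> J - {j}"
    then have "k \<in> I" "k \<noteq> j" using J by auto
    then show "e k * e j = 0" using orth jI by metis
  qed
  finally show "esum e J * e j = e j" using id jI by simp
  have "e j * esum e J = (\<Sum>k\<in>J. e j * e k)" unfolding esum_def by (simp add: sum_distrib_left)
  also have "\<dots> = e j * e j + (\<Sum>k\<in>J - {j}. e j * e k)" using J by (simp add: sum.remove)
  also have "(\<Sum>k\<in>J - {j}. e j * e k) = 0"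
  proof (rule sum.neutral, rule ballI)
    fix k assume "k \<in> J - {j}"
    then have "k \<in> I" "k \<noteq> j" using J by auto
    then show "e j * e k = 0" using orth jI by metis
  qed
  finally show "e j * esum e J = e j" using id jI by simp
qed

lemma esum_idem:
  assumes D: "auf_data asc I e" and J: "finite J" "J \<subseteq> I"
  shows "idem (esum e J)"
proof -
  have "esum e J * esum e J = (\<Sum>j\<in>J. esum e J * e j)" by (simp add: esum_def sum_distrib_left)
  also have "\<dots> = (\<Sum>j\<in>J. e j)" using esum_mult(1)[OF D J] by (intro sum.cong) auto
  also have "\<dots> = esum e J" unfolding esum_def ..
  finally show ?thesis unfolding idem_def .
qed

lemma esum_absorb:
  assumes D: "auf_data asc I e" and J: "finite J" "J \<subseteq> I"
    and F: "fst ` F \<subseteq> J" "snd ` F \<subseteq> J" and x: "x = (\<Sum>(i, j)\<in>F. e i * y (i, j) * e j)"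
  shows "esum e J * x = x" "x * esum e J = x"
proof -
  have "esum e J * x = (\<Sum>(i, j)\<in>F. esum e J * (e i * y (i, j) * e j))"
    unfolding x by (simp add: sum_distrib_left case_prod_beta)
  also have "\<dots> = (\<Sum>(i, j)\<in>F. e i * y (i, j) * e j)"
  proof (intro sum.cong refl, clarsimp)
    fix i j assume "(i, j) \<in> F"
    then have "i \<in> J" using F by force
    then show "esum e J * (e i * y (i, j) * e j) = e i * y (i, j) * e j"
      using esum_mult(1)[OF D J] by (simp add: mult.assoc[symmetric])
  qed
  finally show "esum e J * x = x" using x by simp
  have "x * esum e J = (\<Sum>(i, j)\<in>F. (e i * y (i, j) * e j) * esum e J)"
    unfolding x by (simp add: sum_distrib_right case_prod_beta)
  also have "\<dots> = (\<Sum>(i, j)\<in>F. e i * y (i, j) * e j)"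
  proof (intro sum.cong refl, clarsimp)
    fix i j assume "(i, j) \<in> F"
    then have "j \<in> J" using F by force
    then show "e i * y (i, j) * e j * esum e J = e i * y (i, j) * e j"
      using esum_mult(2)[OF D J] by (simp add: mult.assoc)
  qed
  finally show "x * esum e J = x" using x by simp
qed

lemma auf_decomp:
  assumes D: "auf_data asc I e"
  shows "\<exists>F y. finite F \<and> F \<subseteq> I \<times> I \<and> x = (\<Sum>(i, j)\<in>F. e i * y (i, j) * e j)"
  using D unfolding auf_data_def by blast

lemma auf_unit:
  assumes D: "auf_data asc I e" and X: "finite X"
  shows "\<exists>J. finite J \<and> J \<subseteq> I \<and> (\<forall>x\<in>X. esum e J * x = x \<and> x * esum e J = x)"
proof -
  have ex: "\<forall>x. \<exists>p. finite (fst p) \<and> fst p \<subseteq> I \<times> I \<and> x = (\<Sum>(i, j)\<in>fst p. e i * snd p (i, j) * e j)"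
  proof
    fix x
    obtain F y where "finite F \<and> F \<subseteq> I \<times> I \<and> x = (\<Sum>(i, j)\<in>F. e i * y (i, j) * e j)"
      using auf_decomp[OF D] by blast
    then show "\<exists>p. finite (fst p) \<and> fst p \<subseteq> I \<times> I \<and> x = (\<Sum>(i, j)\<in>fst p. e i * snd p (i, j) * e j)"
      by (intro exI[of _ "(F, y)"]) simp
  qed
  obtain P where P: "\<forall>x. finite (fst (P x)) \<and> fst (P x) \<subseteq> I \<times> I \<and> x = (\<Sum>(i, j)\<in>fst (P x). e i * snd (P x) (i, j) * e j)"
    using choice[OF ex] by blast
  define F where "F x = fst (P x)" for x
  define y where "y x = snd (P x)" for x
  have Fy: "finite (F x) \<and> F x \<subseteq> I \<times> I \<and> x = (\<Sum>(i, j)\<in>F x. e i * y x (i, j) * e j)" for x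
    using P unfolding F_def y_def by blast
  define J where "J = (\<Union>x\<in>X. fst ` F x \<union> snd ` F x)"
  have J1: "finite J" unfolding J_def using X Fy by blast
  have J2: "J \<subseteq> I"
  proof
    fix j assume "j \<in> J"
    then obtain x p where p: "p \<in> F x" "j = fst p \<or> j = snd p" unfolding J_def by blast
    have "p \<in> I \<times> I" using p(1) Fy[of x] by blast
    then show "j \<in> I" using p(2) by (cases p) auto
  qed
  note J = J1 J2
  show ?thesis
  proof (intro exI[of _ J] conjI J ballI)
    fix x assume "x \<in> X"
    then have "fst ` F x \<subseteq> J" "snd ` F x \<subseteq> J" unfolding J_def by auto
    then show "esum e J * x = x" "x * esum e J = x" using esum_absorb[OF D J _ _ conjunct2[OF conjunct2[OF Fy]]] by blast+
  qed
qed

lemma fin_gen_rep: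
  assumes M: "lmodule asc G" and xs: "set xs \<subseteq> vcarrier G" "distinct xs"
    and gen: "\<forall>N. submodule G N \<and> set xs \<subseteq> N \<longrightarrow> N = vcarrier G"
    and qc: "\<forall>x\<in>set xs. \<exists>b. lact G b x = x"
    and y: "y \<in> vcarrier G"
  shows "\<exists>a. y = vsum_list G (map (\<lambda>x. lact G (a x) x) xs)"
proof -
  note V = lmoduleD(1)[OF M]
  define N0 where "N0 = {y. \<exists>a. y = vsum_list G (map (\<lambda>x. lact G (a x) x) xs)}"
  have inC: "vsum_list G (map (\<lambda>x. lact G (a x) x) xs) \<in> vcarrier G" for a
    using xs(1) by (intro vsum_closed[OF V]) (auto intro: lmoduleD(2)[OF M])
  have "submodule G N0"
    unfolding submodule_def
  proof (intro conjI ballI allI)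
    show "N0 \<subseteq> vcarrier G" unfolding N0_def using inC by blast
    have H: "map (lact G 0) xs = map (\<lambda>x. vzero G) xs"
      using xs(1) lact_zero_ring[OF M] by auto
    have "vzero G = vsum_list G (map (\<lambda>x. lact G ((\<lambda>_. 0) x) x) xs)"
      by (simp only: H vsum_map_zero[OF V])
    then show "vzero G \<in> N0" unfolding N0_def by (intro CollectI exI[of _ "\<lambda>_. 0"]) assumption
  next
    fix y1 y2 assume "y1 \<in> N0" "y2 \<in> N0"
    then obtain a1 a2 where a: "y1 = vsum_list G (map (\<lambda>x. lact G (a1 x) x) xs)"
      "y2 = vsum_list G (map (\<lambda>x. lact G (a2 x) x) xs)" unfolding N0_def by blast
    have "vadd G y1 y2 = vsum_list G (map (\<lambda>x. vadd G (lact G (a1 x) x) (lact G (a2 x) x)) xs)"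
      unfolding a using xs(1) lmoduleD(2)[OF M]
      by (subst vsum_map_add[OF V]) (auto simp: map_map o_def)
    also have "\<dots> = vsum_list G (map (\<lambda>x. lact G (a1 x + a2 x) x) xs)"
      using xs(1) lmoduleD(4)[OF M] by (intro arg_cong[where f="vsum_list G"] map_cong) auto
    finally show "vadd G y1 y2 \<in> N0" unfolding N0_def by (intro CollectI exI[of _ "\<lambda>x. a1 x + a2 x"]) assumption
  next
    fix c y1 assume "y1 \<in> N0"
    then obtain a1 where a: "y1 = vsum_list G (map (\<lambda>x. lact G (a1 x) x) xs)" unfolding N0_def by blast
    have "vsc G c y1 = vsum_list G (map (\<lambda>x. vsc G c (lact G (a1 x) x)) xs)"
      unfolding a using xs(1) lmoduleD(2)[OF M]
      by (subst vsum_map_sc[OF V]) (auto simp: map_map o_def)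
    also have "\<dots> = vsum_list G (map (\<lambda>x. lact G (asc c (a1 x)) x) xs)"
      using xs(1) lmoduleD(6)[OF M] by (intro arg_cong[where f="vsum_list G"] map_cong) auto
    finally show "vsc G c y1 \<in> N0" unfolding N0_def by (intro CollectI exI[of _ "\<lambda>x. asc c (a1 x)"]) assumption
  next
    fix d y1 assume "y1 \<in> N0"
    then obtain a1 where a: "y1 = vsum_list G (map (\<lambda>x. lact G (a1 x) x) xs)" unfolding N0_def by blast
    have "lact G d y1 = vsum_list G (map (\<lambda>x. lact G d (lact G (a1 x) x)) xs)"
      unfolding a using xs(1) lmoduleD(2)[OF M]
      by (subst vsum_map_lact[OF M]) (auto simp: map_map o_def)
    also have "\<dots> = vsum_list G (map (\<lambda>x. lact G (d * a1 x) x) xs)"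
      using xs(1) lmoduleD(5)[OF M] by (intro arg_cong[where f="vsum_list G"] map_cong) auto
    finally show "lact G d y1 \<in> N0" unfolding N0_def by (intro CollectI exI[of _ "\<lambda>x. d * a1 x"]) assumption
  qed
  moreover have "set xs \<subseteq> N0"
  proof
    fix x0 assume x0: "x0 \<in> set xs"
    then obtain b where b: "lact G b x0 = x0" using qc by blast
    define a where "a x = (if x = x0 then b else 0)" for x
    have "map (\<lambda>x. lact G (a x) x) xs = map (\<lambda>x. if x = x0 then lact G b x else vzero G) xs"
      using xs(1) lact_zero_ring[OF M] unfolding a_def by (intro map_cong) auto
    then have "vsum_list G (map (\<lambda>x. lact G (a x) x) xs) = vsum_list G (map (\<lambda>x. if x = x0 then lact G b x else vzero G) xs)"
      by (rule arg_cong)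
    also have "\<dots> = x0"
      using vsum_single[OF V xs(2) x0, of "\<lambda>x. lact G b x"] b x0 xs(1) by auto
    finally have "vsum_list G (map (\<lambda>x. lact G (a x) x) xs) = x0" .
    then show "x0 \<in> N0" unfolding N0_def by (intro CollectI exI[of _ a]) (rule sym)
  qed
  ultimately have "N0 = vcarrier G" using gen by blast
  then show ?thesis using y unfolding N0_def by blast
qed

definition iota :: "'g \<Rightarrow> ('g \<Rightarrow> complex \<times> 'a::ring)" where
  "iota g = (\<lambda>g'. if g' = g then (1, 0) else (0, 0))"

lemma inj_iota: "inj (iota :: 'g \<Rightarrow> 'g \<Rightarrow> complex \<times> 'a::ring)"
proof (rule injI)
  fix x y :: 'g assume "(iota x :: 'g \<Rightarrow> complex \<times> 'a) = iota y"
  then have "(iota x :: 'g \<Rightarrow> complex \<times> 'a) x = iota y x" by simp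
  then show "x = y" unfolding iota_def by (auto split: if_splits)
qed

definition Gc :: "('a::ring, 'g) lmod \<Rightarrow> ('a, 'g \<Rightarrow> complex \<times> 'a) lmod" where
  "Gc G = \<lparr>vcarrier = iota ` vcarrier G,
     vadd = \<lambda>u v. iota (vadd G (inv iota u) (inv iota v)),
     vzero = iota (vzero G),
     vsc = \<lambda>c u. iota (vsc G c (inv iota u)),
     lact = \<lambda>a u. iota (lact G a (inv iota u))\<rparr>"

lemma inv_iota[simp]: "inv iota (iota x) = x"
  by (rule inv_f_f[OF inj_iota])

lemma Gc_simps[simp]:
  "vcarrier (Gc G) = iota ` vcarrier G"
  "vadd (Gc G) u v = iota (vadd G (inv iota u) (inv iota v))"
  "vzero (Gc G) = iota (vzero G)"
  "vsc (Gc G) c u = iota (vsc G c (inv iota u))"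
  "lact (Gc G) a u = iota (lact G a (inv iota u))"
  by (simp_all add: Gc_def)

lemma Gc_lmodule:
  assumes M: "lmodule asc G" shows "lmodule asc (Gc G)"
proof -
  note V = lmoduleD(1)[OF M]
  have "cvs (Gc G)"
    unfolding cvs_def
  proof (intro conjI ballI allI)
    fix x assume "x \<in> vcarrier (Gc G)"
    then obtain x' where x': "x' \<in> vcarrier G" "x = iota x'" by auto
    then obtain y' where "y' \<in> vcarrier G" "vadd G x' y' = vzero G" using cvsD(7)[OF V] by blast
    then show "\<exists>y\<in>vcarrier (Gc G). vadd (Gc G) x y = vzero (Gc G)" using x' by (intro bexI[of _ "iota y'"]) auto
  qed (auto simp: cvsD(1,2,3,4,6,8,9,10,11)[OF V] cvs_zero_right[OF V] intro: cvsD(5)[OF V] arg_cong[where f=iota], metis cvsD(5)[OF V])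
  then show ?thesis unfolding lmodule_def by (auto simp: lmoduleD[OF M] cvsD[OF V])
qed

lemma iota_lhom: "lhom G (Gc G) iota"
  unfolding lhom_def by simp

definition Nfree :: "(complex \<Rightarrow> 'a::ring \<Rightarrow> 'a) \<Rightarrow> ('a, 'g \<Rightarrow> complex \<times> 'a) lmod" where
  "Nfree asc = \<lparr>vcarrier = UNIV,
     vadd = \<lambda>u v g. (fst (u g) + fst (v g), snd (u g) + snd (v g)),
     vzero = \<lambda>g. (0, 0),
     vsc = \<lambda>c u g. (c * fst (u g), asc c (snd (u g))),
     lact = \<lambda>a u g. (0, a * snd (u g))\<rparr>"

lemma Nfree_simps[simp]:
  "vcarrier (Nfree asc) = UNIV"
  "vadd (Nfree asc) u v = (\<lambda>g. (fst (u g) + fst (v g), snd (u g) + snd (v g)))"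
  "vzero (Nfree asc) = (\<lambda>g. (0, 0))"
  "vsc (Nfree asc) c u = (\<lambda>g. (c * fst (u g), asc c (snd (u g))))"
  "lact (Nfree asc) a u = (\<lambda>g. (0, a * snd (u g)))"
  by (simp_all add: Nfree_def)

lemma Nfree_lmodule:
  fixes asc :: "complex \<Rightarrow> 'a::ring \<Rightarrow> 'a"
  assumes A: "is_calg asc" shows "lmodule asc (Nfree asc :: ('a, 'g \<Rightarrow> complex \<times> 'a) lmod)"
proof -
  have inv: "\<exists>y. (\<lambda>g. (fst (x g) + fst (y g), snd (x g) + snd (y g))) = (\<lambda>g. (0::complex, 0::'a))"
    for x :: "'g \<Rightarrow> complex \<times> 'a"
    by (intro exI[of _ "\<lambda>g. (- fst (x g), - snd (x g))"]) auto
  have "cvs (Nfree asc :: ('a, 'g \<Rightarrow> complex \<times> 'a) lmod)"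
    unfolding cvs_def using inv by (auto simp: calg_vs[OF A] add.assoc add.commute distrib_right distrib_left)
  moreover have "a * asc c b = asc c a * b" for a b c
    using calg_vs(6,7)[OF A] by metis
  ultimately show ?thesis unfolding lmodule_def
    by (auto simp: calg_vs[OF A] distrib_left distrib_right mult.assoc)
qed

lemma embed:
  fixes asc :: "complex \<Rightarrow> 'a::ring \<Rightarrow> 'a" and G :: "('a, 'g) lmod"
  assumes A: "is_calg asc" and M: "lmodule asc G" and C: "coherent G" and P: "projective_mod asc G"
  shows "\<exists>k :: 'g \<Rightarrow> 'g \<Rightarrow> 'a. inj_on k (vcarrier G)
     \<and> (\<forall>y\<in>vcarrier G. \<forall>y'\<in>vcarrier G. k (vadd G y y') = k y + k y')
     \<and> (\<forall>c. \<forall>y\<in>vcarrier G. k (vsc G c y) = (\<lambda>g. asc c (k y g)))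
     \<and> (\<forall>a. \<forall>y\<in>vcarrier G. k (lact G a y) = (\<lambda>g. a * k y g))"
proof -
  note V = lmoduleD(1)[OF M]
  obtain S where S: "finite S" "S \<subseteq> vcarrier G" "\<forall>N. submodule G N \<and> S \<subseteq> N \<longrightarrow> N = vcarrier G"
    using C unfolding coherent_def fin_gen_def by blast
  obtain xs where xs: "set xs = S" "distinct xs" using finite_distinct_list[OF S(1)] by blast
  have qc: "\<forall>x\<in>set xs. \<exists>b. lact G b x = x" using C S(2) xs(1) unfolding coherent_def quasicoherent_def by blast
  have xsC: "set xs \<subseteq> vcarrier G" using S xs by simp
  define s where "s u = vsum_list G (map (\<lambda>x. lact G (snd (u x)) x) xs)" for u :: "'g \<Rightarrow> complex \<times> 'a"
  define p where "p u = (iota (s u) :: 'g \<Rightarrow> complex \<times> 'a)" for u :: "'g \<Rightarrow> complex \<times> 'a"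
  have sC: "s u \<in> vcarrier G" for u
    unfolding s_def using xsC by (intro vsum_closed[OF V]) (auto intro: lmoduleD(2)[OF M])
  have s_add: "s (vadd (Nfree asc) u v) = vadd G (s u) (s v)" for u v
  proof -
    have "s (vadd (Nfree asc) u v) = vsum_list G (map (\<lambda>x. vadd G (lact G (snd (u x)) x) (lact G (snd (v x)) x)) xs)"
      unfolding s_def using xsC lmoduleD(4)[OF M] by (intro arg_cong[where f="vsum_list G"] map_cong) auto
    also have "\<dots> = vadd G (s u) (s v)"
      unfolding s_def using xsC lmoduleD(2)[OF M] by (subst vsum_map_add[OF V]) (auto simp: map_map o_def)
    finally show ?thesis .
  qed
  have s_sc: "s (vsc (Nfree asc) c u) = vsc G c (s u)" for c u
  proof -
    have "s (vsc (Nfree asc) c u) = vsum_list G (map (\<lambda>x. vsc G c (lact G (snd (u x)) x)) xs)"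
      unfolding s_def using xsC lmoduleD(6)[OF M] by (intro arg_cong[where f="vsum_list G"] map_cong) auto
    also have "\<dots> = vsc G c (s u)"
      unfolding s_def using xsC lmoduleD(2)[OF M] by (subst vsum_map_sc[OF V]) (auto simp: map_map o_def)
    finally show ?thesis .
  qed
  have s_lact: "s (lact (Nfree asc) a u) = lact G a (s u)" for a u
  proof -
    have "s (lact (Nfree asc) a u) = vsum_list G (map (\<lambda>x. lact G a (lact G (snd (u x)) x)) xs)"
      unfolding s_def using xsC lmoduleD(5)[OF M] by (intro arg_cong[where f="vsum_list G"] map_cong) auto
    also have "\<dots> = lact G a (s u)"
      unfolding s_def using xsC lmoduleD(2)[OF M] by (subst vsum_map_lact[OF M]) (auto simp: map_map o_def)
    finally show ?thesis .
  qed
  have plhom: "lhom (Nfree asc) (Gc G) p"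
    unfolding lhom_def p_def using sC s_add s_sc s_lact by simp
  have psurj: "p ` vcarrier (Nfree asc) = vcarrier (Gc G)"
  proof
    show "p ` vcarrier (Nfree asc) \<subseteq> vcarrier (Gc G)" unfolding p_def using sC by auto
    show "vcarrier (Gc G) \<subseteq> p ` vcarrier (Nfree asc)"
    proof
      fix z assume "z \<in> vcarrier (Gc G)"
      then obtain y where y: "y \<in> vcarrier G" "z = iota y" by auto
      obtain a where a: "y = vsum_list G (map (\<lambda>x. lact G (a x) x) xs)"
        using fin_gen_rep[OF M xsC xs(2) _ qc y(1)] S(3) xs(1) by blast
      have "s (\<lambda>g. (0, a g)) = y" unfolding s_def a by simp
      then show "z \<in> p ` vcarrier (Nfree asc)" unfolding p_def y(2) by (intro image_eqI[of _ _ "\<lambda>g. (0, a g)"]) auto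
    qed
  qed
  obtain h where h: "lhom G (Nfree asc) h" "\<forall>x\<in>vcarrier G. p (h x) = iota x"
    using P unfolding projective_mod_def
    using Nfree_lmodule[OF A] Gc_lmodule[OF M] plhom psurj iota_lhom by blast
  define k where "k y = (\<lambda>g. snd (h y g))" for y
  have "inj_on k (vcarrier G)"
  proof (rule inj_onI)
    fix y y' assume yy: "y \<in> vcarrier G" "y' \<in> vcarrier G" "k y = k y'"
    have "s (h y) = s (h y')" unfolding s_def using yy(3) unfolding k_def
      by (metis (no_types, lifting))
    then have "(iota y :: 'g \<Rightarrow> complex \<times> 'a) = iota y'" using h(2) yy unfolding p_def by metis
    then show "y = y'" using inj_iota by (metis injD)
  qed
  moreover have "\<forall>y\<in>vcarrier G. \<forall>y'\<in>vcarrier G. k (vadd G y y') = k y + k y'"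
    using lhomD(2)[OF h(1)] unfolding k_def by (auto simp: plus_fun_def)
  moreover have "\<forall>c. \<forall>y\<in>vcarrier G. k (vsc G c y) = (\<lambda>g. asc c (k y g))"
    using lhomD(3)[OF h(1)] unfolding k_def by auto
  moreover have "\<forall>a. \<forall>y\<in>vcarrier G. k (lact G a y) = (\<lambda>g. a * k y g)"
    using lhomD(4)[OF h(1)] unfolding k_def by auto
  ultimately show ?thesis by blast
qed

definition fsc :: "(complex \<Rightarrow> 'a::ring \<Rightarrow> 'a) \<Rightarrow> complex \<Rightarrow> ('g \<Rightarrow> 'a) \<Rightarrow> ('g \<Rightarrow> 'a)" where
  "fsc asc c u = (\<lambda>g. asc c (u g))"

lemma fsc_vs: assumes A: "is_calg asc" shows "vector_space (fsc asc :: complex \<Rightarrow> ('g \<Rightarrow> 'a::ring) \<Rightarrow> _)"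
  by (unfold_locales) (auto simp: fsc_def calg_vs[OF A] plus_fun_def)

lemma mx_linear:
  assumes A: "is_calg asc"
  shows "Vector_Spaces.linear asc (fsc asc) (\<lambda>c. (\<lambda>g. c * (w :: 'g \<Rightarrow> 'a::ring) g))"
  unfolding Vector_Spaces.linear_iff using calg_vs(1,6)[OF A] fsc_vs[OF A]
  by (auto simp: fsc_def plus_fun_def distrib_right)

lemma sum_list_span:
  assumes "vector_space s" "\<forall>v\<in>set vs. v \<in> module.span s Z"
  shows "sum_list vs \<in> module.span s Z"
proof -
  interpret vector_space s by fact
  show ?thesis using assms(2)
  proof (induction vs)
    case Nil then show ?case using span_zero by simp
  next
    case (Cons a vs) then show ?case using span_add by simp
  qed
qed

lemma k_vsum:
  fixes k :: "'g \<Rightarrow> 'c::ab_group_add"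
  assumes M: "lmodule asc G" and kadd: "\<forall>y\<in>vcarrier G. \<forall>y'\<in>vcarrier G. k (vadd G y y') = k y + k y'"
    and ys: "set ys \<subseteq> vcarrier G"
  shows "k (vsum_list G ys) = sum_list (map k ys)"
  using ys
proof (induction ys)
  case Nil
  note V = lmoduleD(1)[OF M]
  have "k (vzero G) = k (vzero G) + k (vzero G)" using kadd cvsD(1,6)[OF V] by metis
  then show ?case by (simp add: vsum_list_def)
next
  case (Cons a ys)
  then show ?case using kadd vsum_closed[OF lmoduleD(1)[OF M], of ys] by (simp add: vsum_list_def)
qed


lemma findim:
  fixes asc :: "complex \<Rightarrow> 'a::ring \<Rightarrow> 'a" and G :: "('a, 'g) lmod" and k :: "'g \<Rightarrow> 'g \<Rightarrow> 'a"
  assumes A: "is_calg asc" and D: "auf_data asc I e" and M: "lmodule asc G" and C: "coherent G"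
    and kadd: "\<forall>y\<in>vcarrier G. \<forall>y'\<in>vcarrier G. k (vadd G y y') = k y + k y'"
    and klact: "\<forall>a. \<forall>y\<in>vcarrier G. k (lact G a y) = (\<lambda>g. a * k y g)"
    and J: "finite J" "J \<subseteq> I"
  shows "\<exists>Z. finite Z \<and> (\<forall>y\<in>vcarrier G. k (lact G (esum e J) y) \<in> module.span (fsc asc) Z)"
proof -
  note V = lmoduleD(1)[OF M]
  interpret VA: vector_space asc using calg_vs(1)[OF A] .
  interpret VF: vector_space "fsc asc :: complex \<Rightarrow> ('g \<Rightarrow> 'a) \<Rightarrow> _" using fsc_vs[OF A] .
  have vp: "vector_space_pair asc (fsc asc :: complex \<Rightarrow> ('g \<Rightarrow> 'a) \<Rightarrow> _)"
    unfolding vector_space_pair_def using calg_vs(1)[OF A] fsc_vs[OF A] by blast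
  define f where "f = esum e J"
  obtain S where S: "finite S" "S \<subseteq> vcarrier G" "\<forall>N. submodule G N \<and> S \<subseteq> N \<longrightarrow> N = vcarrier G"
    using C unfolding coherent_def fin_gen_def by blast
  obtain xs where xs: "set xs = S" "distinct xs" using finite_distinct_list[OF S(1)] by blast
  have qc: "\<forall>x\<in>set xs. \<exists>b. lact G b x = x" using C S(2) xs(1) unfolding coherent_def quasicoherent_def by blast
  have xsC: "set xs \<subseteq> vcarrier G" using S xs by simp
  have gen: "\<forall>N. submodule G N \<and> set xs \<subseteq> N \<longrightarrow> N = vcarrier G" using S(3) xs(1) by simp
  obtain b where b: "\<forall>x\<in>set xs. lact G (b x) x = x" using bchoice[OF qc] by blast
  have exB: "\<forall>p\<in>I \<times> I. \<exists>B. finite B \<and> {e (fst p) * a * e (snd p) |a. True} \<subseteq> module.span asc B"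
    using D unfolding auf_data_def by auto
  obtain Bp where Bp: "\<forall>p\<in>I \<times> I. finite (Bp p) \<and> {e (fst p) * a * e (snd p) |a. True} \<subseteq> module.span asc (Bp p)"
    using bchoice[OF exB] by blast
  have ex: "\<forall>x. \<exists>q. finite (fst q) \<and> fst q \<subseteq> I \<times> I \<and> b x = (\<Sum>(i, j)\<in>fst q. e i * snd q (i, j) * e j)"
  proof
    fix x
    obtain F y where "finite F \<and> F \<subseteq> I \<times> I \<and> b x = (\<Sum>(i, j)\<in>F. e i * y (i, j) * e j)"
      using auf_decomp[OF D] by blast
    then show "\<exists>q. finite (fst q) \<and> fst q \<subseteq> I \<times> I \<and> b x = (\<Sum>(i, j)\<in>fst q. e i * snd q (i, j) * e j)"
      by (intro exI[of _ "(F, y)"]) simp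
  qed
  obtain Q where Q: "\<forall>x. finite (fst (Q x)) \<and> fst (Q x) \<subseteq> I \<times> I \<and> b x = (\<Sum>(i, j)\<in>fst (Q x). e i * snd (Q x) (i, j) * e j)"
    using choice[OF ex] by blast
  define F where "F x = fst (Q x)" for x
  define z where "z x = snd (Q x)" for x
  have Fz: "finite (F x)" "F x \<subseteq> I \<times> I" "b x = (\<Sum>p\<in>F x. e (fst p) * z x p * e (snd p))" for x
    using Q unfolding F_def z_def by (auto simp: case_prod_beta)
  define Bx where "Bx x = (\<Union>j\<in>J. \<Union>p\<in>F x. Bp (j, snd p))" for x
  have Bx_fin: "finite (Bx x)" for x
    unfolding Bx_def using J Fz(1,2)[of x] Bp by (auto intro!: finite_UN_I) (blast)
  have claim1: "f * c * b x \<in> module.span asc (Bx x)" for c x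
  proof -
    have "f * c * b x = (\<Sum>p\<in>F x. \<Sum>j\<in>J. e j * (c * e (fst p) * z x p) * e (snd p))"
      unfolding f_def esum_def Fz(3) by (simp add: sum_distrib_left sum_distrib_right mult.assoc)
    also have "\<dots> \<in> module.span asc (Bx x)"
    proof (intro VA.span_sum)
      fix p j assume p: "p \<in> F x" and j: "j \<in> J"
      have pI: "(j, snd p) \<in> I \<times> I" using p j J Fz(2)[of x] by (cases p) auto
      have "e j * (c * e (fst p) * z x p) * e (snd p) \<in> module.span asc (Bp (j, snd p))"
        using Bp pI by fastforce
      moreover have "Bp (j, snd p) \<subseteq> Bx x" unfolding Bx_def using p j by blast
      ultimately show "e j * (c * e (fst p) * z x p) * e (snd p) \<in> module.span asc (Bx x)"
        using VA.span_mono by blast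
    qed
    finally show ?thesis .
  qed
  define Mx where "Mx x = (\<lambda>c. (\<lambda>g. c * k x g))" for x
  define Z where "Z = (\<Union>x\<in>set xs. Mx x ` Bx x)"
  have Zfin: "finite Z" unfolding Z_def using Bx_fin by blast
  have Mx_span: "Mx x c \<in> module.span (fsc asc) Z" if "x \<in> set xs" "c \<in> module.span asc (Bx x)" for x c
  proof -
    have lin: "Vector_Spaces.linear asc (fsc asc) (Mx x)" unfolding Mx_def by (rule mx_linear[OF A])
    have "Mx x c \<in> Mx x ` module.span asc (Bx x)" using that(2) by blast
    also have "\<dots> = module.span (fsc asc) (Mx x ` Bx x)"
      using vector_space_pair.linear_span_image[OF vp lin] by simp
    also have "\<dots> \<subseteq> module.span (fsc asc) Z" unfolding Z_def using that(1) by (intro VF.span_mono) blast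
    finally show ?thesis .
  qed
  show ?thesis
  proof (intro exI[of _ Z] conjI Zfin ballI)
    fix y assume y: "y \<in> vcarrier G"
    obtain a where a: "y = vsum_list G (map (\<lambda>x. lact G (a x) x) xs)"
      using fin_gen_rep[OF M xsC xs(2) gen qc y] by blast
    have "lact G f y = vsum_list G (map (\<lambda>x. lact G f (lact G (a x) x)) xs)"
      unfolding a using xsC lmoduleD(2)[OF M] by (subst vsum_map_lact[OF M]) (auto simp: map_map o_def)
    also have "\<dots> = vsum_list G (map (\<lambda>x. lact G (f * a x * b x) x) xs)"
    proof (intro arg_cong[where f="vsum_list G"] map_cong refl)
      fix x assume x: "x \<in> set xs"
      then have xC: "x \<in> vcarrier G" using xsC by blast
      have "lact G f (lact G (a x) x) = lact G f (lact G (a x) (lact G (b x) x))" using b x by simp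
      also have "\<dots> = lact G (f * a x * b x) x" using lmoduleD(2,5)[OF M] xC by simp
      finally show "lact G f (lact G (a x) x) = lact G (f * a x * b x) x" .
    qed
    finally have fy: "lact G f y = vsum_list G (map (\<lambda>x. lact G (f * a x * b x) x) xs)" .
    have "k (lact G f y) = sum_list (map (\<lambda>x. k (lact G (f * a x * b x) x)) xs)"
      unfolding fy using xsC lmoduleD(2)[OF M] by (subst k_vsum[OF M kadd]) (auto simp: map_map o_def)
    also have "\<dots> = sum_list (map (\<lambda>x. Mx x (f * a x * b x)) xs)"
      unfolding Mx_def using xsC klact by (intro arg_cong[where f=sum_list] map_cong refl) auto
    also have "\<dots> \<in> module.span (fsc asc) Z"
      using Mx_span claim1 by (intro sum_list_span[OF fsc_vs[OF A]]) auto
    finally show "k (lact G (esum e J) y) \<in> module.span (fsc asc) Z" unfolding f_def .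
  qed
qed

lemma lact_End0:
  fixes asc :: "complex \<Rightarrow> 'a::ring \<Rightarrow> 'a" and G :: "('a, 'g) lmod"
  assumes A: "is_calg asc" and D: "auf_data asc I e" and M: "lmodule asc G" and C: "coherent G"
    and P: "projective_mod asc G"
  shows "lact G a \<in> End0 G"
proof -
  note V = lmoduleD(1)[OF M]
  interpret VF: vector_space "fsc asc :: complex \<Rightarrow> ('g \<Rightarrow> 'a) \<Rightarrow> _" using fsc_vs[OF A] .
  obtain k :: "'g \<Rightarrow> 'g \<Rightarrow> 'a" where kinj: "inj_on k (vcarrier G)"
     and kadd: "\<forall>y\<in>vcarrier G. \<forall>y'\<in>vcarrier G. k (vadd G y y') = k y + k y'"
     and ksc: "\<forall>c. \<forall>y\<in>vcarrier G. k (vsc G c y) = (\<lambda>g. asc c (k y g))"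
     and klact: "\<forall>a. \<forall>y\<in>vcarrier G. k (lact G a y) = (\<lambda>g. a * k y g)"
    using embed[OF A M C P] by blast
  have ksc': "k (vsc G c y) = fsc asc c (k y)" if "y \<in> vcarrier G" for c y
    using ksc that unfolding fsc_def by blast
  obtain J where J: "finite J" "J \<subseteq> I" "\<forall>x\<in>{a}. esum e J * x = x \<and> x * esum e J = x"
    using auf_unit[OF D, of "{a}"] by blast
  define f where "f = esum e J"
  have af: "a * f = a" using J(3) unfolding f_def by simp
  have fid: "f * f = f" using esum_idem[OF D J(1,2)] unfolding f_def idem_def .
  obtain Z where Z: "finite Z" "\<forall>y\<in>vcarrier G. k (lact G f y) \<in> module.span (fsc asc) Z"
    using findim[OF A D M C kadd klact J(1,2)] unfolding f_def by blast
  define Wk where "Wk = (\<lambda>y. k (lact G f y)) ` vcarrier G"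
  obtain \<beta> where \<beta>: "\<beta> \<subseteq> Wk" "VF.independent \<beta>" "Wk \<subseteq> VF.span \<beta>"
    using VF.maximal_independent_subset[of Wk] by blast
  have \<beta>fin: "finite \<beta>"
    using VF.independent_span_bound[OF Z(1) \<beta>(2)] \<beta>(1) Z(2) unfolding Wk_def by blast
  have exg: "\<forall>b\<in>\<beta>. \<exists>y. y \<in> vcarrier G \<and> b = k (lact G f y)" using \<beta>(1) unfolding Wk_def by blast
  obtain gy where gy: "\<forall>b\<in>\<beta>. gy b \<in> vcarrier G \<and> b = k (lact G f (gy b))"
    using bchoice[OF exg] by blast
  define g where "g b = lact G f (gy b)" for b
  have gC: "g b \<in> vcarrier G" and kg: "k (g b) = b" if "b \<in> \<beta>" for b
    using gy that lmoduleD(2)[OF M] unfolding g_def by auto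
  obtain bs where bs: "set bs = \<beta>" "distinct bs" using finite_distinct_list[OF \<beta>fin] by blast
  define \<phi> where "\<phi> b = (\<lambda>y. VF.representation \<beta> (k (lact G f y)) b)" for b
  define cs where "cs = map (\<lambda>b. (1::complex, \<phi> b, lact G a (g b))) bs"
  have inspan: "k (lact G f y) \<in> VF.span \<beta>" if "y \<in> vcarrier G" for y
    using \<beta>(3) that unfolding Wk_def by blast
  have dual: "\<phi> b \<in> dual0 G" for b
    unfolding dual0_def
  proof (intro CollectI conjI ballI allI)
    fix x y assume xy: "x \<in> vcarrier G" "y \<in> vcarrier G"
    have "k (lact G f (vadd G x y)) = k (lact G f x) + k (lact G f y)"
      using xy lmoduleD(2,3)[OF M] kadd by simp
    then show "\<phi> b (vadd G x y) = \<phi> b x + \<phi> b y"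
      unfolding \<phi>_def using VF.representation_add[OF \<beta>(2) inspan[OF xy(2)] inspan[OF xy(1)]] by simp
  next
    fix c x assume x: "x \<in> vcarrier G"
    have "k (lact G f (vsc G c x)) = fsc asc c (k (lact G f x))"
      using x lmoduleD(2,7)[OF M] ksc' by simp
    then show "\<phi> b (vsc G c x) = c * \<phi> b x"
      unfolding \<phi>_def using VF.representation_scale[OF \<beta>(2) inspan[OF x]] by simp
  next
    show "\<exists>e. idem e \<and> (\<forall>y\<in>vcarrier G. \<phi> b (lact G e y) = \<phi> b y)"
      using fid lmoduleD(5)[OF M] unfolding idem_def \<phi>_def by (intro exI[of _ f]) (simp flip: lmoduleD(5)[OF M])
  qed
  have rec: "lact G a y = vsum_list G (map (\<lambda>(c, \<phi>, \<xi>). vsc G (c * \<phi> y) \<xi>) cs)" if y: "y \<in> vcarrier G" for y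
  proof -
    define w where "w = k (lact G f y)"
    define r where "r b = VF.representation \<beta> w b" for b
    have fyC: "lact G f y \<in> vcarrier G" using y lmoduleD(2)[OF M] by blast
    have vsC: "vsum_list G (map (\<lambda>b. vsc G (r b) (g b)) bs) \<in> vcarrier G"
      using bs gC cvsD(3)[OF V] by (intro vsum_closed[OF V]) auto
    have "w = (\<Sum>b\<in>\<beta>. fsc asc (r b) b)"
      unfolding r_def w_def using VF.sum_representation_eq[OF \<beta>(2) inspan[OF y] \<beta>fin order_refl] by simp
    also have "\<dots> = sum_list (map (\<lambda>b. fsc asc (r b) b) bs)"
      using bs by (simp add: sum_list_distinct_conv_sum_set)
    also have "\<dots> = sum_list (map (\<lambda>b. k (vsc G (r b) (g b))) bs)"
      using bs gC kg ksc' by (intro arg_cong[where f=sum_list] map_cong refl) auto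
    also have "\<dots> = k (vsum_list G (map (\<lambda>b. vsc G (r b) (g b)) bs))"
      using bs gC cvsD(3)[OF V] by (subst k_vsum[OF M kadd]) (auto simp: map_map o_def)
    finally have "k (lact G f y) = k (vsum_list G (map (\<lambda>b. vsc G (r b) (g b)) bs))" unfolding w_def .
    then have fy: "lact G f y = vsum_list G (map (\<lambda>b. vsc G (r b) (g b)) bs)"
      using kinj fyC vsC by (meson inj_onD)
    have "lact G a y = lact G a (lact G f y)" using af lmoduleD(5)[OF M y] by metis
    also have "\<dots> = vsum_list G (map (\<lambda>b. lact G a (vsc G (r b) (g b))) bs)"
      unfolding fy using bs gC cvsD(3)[OF V] by (subst vsum_map_lact[OF M]) (auto simp: map_map o_def)
    also have "\<dots> = vsum_list G (map (\<lambda>(c, \<phi>, \<xi>). vsc G (c * \<phi> y) \<xi>) cs)"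
      unfolding cs_def r_def w_def \<phi>_def using bs gC lmoduleD(7)[OF M]
      by (auto simp: map_map o_def intro!: arg_cong[where f="vsum_list G"] map_cong)
    finally show ?thesis .
  qed
  have c1: "\<forall>(c, \<phi>', \<xi>)\<in>set cs. \<phi>' \<in> dual0 G \<and> \<xi> \<in> vcarrier G"
    unfolding cs_def using dual bs gC lmoduleD(2)[OF M] by auto
  have c2: "\<forall>y\<in>vcarrier G. lact G a y = vsum_list G (map (\<lambda>(c, \<phi>, \<xi>). vsc G (c * \<phi> y) \<xi>) cs)"
    using rec by blast
  show ?thesis unfolding End0_def using c1 c2 by blast
qed

lemma dsum_simps[simp]:
  "vcarrier (dsum_pow G n) = {f. (\<forall>i<n. f i \<in> vcarrier G) \<and> (\<forall>i\<ge>n. f i = vzero G)}"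
  "vadd (dsum_pow G n) u v = (\<lambda>i. vadd G (u i) (v i))"
  "vzero (dsum_pow G n) = (\<lambda>i. vzero G)"
  "vsc (dsum_pow G n) c u = (\<lambda>i. vsc G c (u i))"
  "lact (dsum_pow G n) a u = (\<lambda>i. lact G a (u i))"
  by (simp_all add: dsum_pow_def)

lemma dsum_allC:
  assumes M: "lmodule asc G" and v: "v \<in> vcarrier (dsum_pow G n)" shows "v i \<in> vcarrier G"
  using v cvsD(1)[OF lmoduleD(1)[OF M]] by (cases "i < n") auto

lemma Mf_coherent:
  assumes A: "is_calg asc" and D: "auf_data asc I e" and f: "idem f"
  shows "coherent (Mf asc f)"
  unfolding coherent_def
proof
  show "quasicoherent (Mf asc f)"
    unfolding quasicoherent_def
  proof
    fix X assume "X \<in> vcarrier (Mf asc f)"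
    then obtain c where c: "X = emb (c * f)" by auto
    obtain J where "finite J" "J \<subseteq> I" "\<forall>x\<in>{c}. esum e J * x = x \<and> x * esum e J = x"
      using auf_unit[OF D, of "{c}"] by blast
    then have "lact (Mf asc f) (esum e J) X = X" unfolding c by (simp add: mult.assoc[symmetric])
    then show "\<exists>a. lact (Mf asc f) a X = X" by blast
  qed
  show "fin_gen (Mf asc f)"
    unfolding fin_gen_def
  proof (intro exI[of _ "{emb f}"] conjI allI impI)
    have "f = f * f" using f unfolding idem_def by simp
    then show "{emb f} \<subseteq> vcarrier (Mf asc f)" by auto
    fix N assume N: "submodule (Mf asc f) N \<and> {emb f} \<subseteq> N"
    have "emb (c * f) \<in> N" for c
      using N unfolding submodule_def by (metis Mf_simps(5) insert_subset unemb_emb)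
    then show "N = vcarrier (Mf asc f)" using N unfolding submodule_def by auto
  qed simp
qed

lemma gen_Mf:
  assumes A: "is_calg asc" and D: "auf_data asc I e" and G: "proj_generator asc G" and f: "idem f"
  shows "\<exists>n \<pi> v. lhom (dsum_pow G n) (Mf asc f) \<pi> \<and> v \<in> vcarrier (dsum_pow G n) \<and> \<pi> v = emb f"
proof -
  have "\<exists>n. is_quotient_of (Mf asc f) (dsum_pow G n)"
    using G Mf_lmodule[OF A] Mf_coherent[OF A D f] unfolding proj_generator_def by blast
  then obtain n \<pi> where \<pi>: "lhom (dsum_pow G n) (Mf asc f) \<pi>" "\<pi> ` vcarrier (dsum_pow G n) = vcarrier (Mf asc f)"
    unfolding is_quotient_of_def by blast
  have "f = f * f" using f unfolding idem_def by simp
  then have "emb f \<in> vcarrier (Mf asc f)" by auto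
  then obtain v where "v \<in> vcarrier (dsum_pow G n)" "\<pi> v = emb f" using \<pi>(2) by (metis imageE)
  then show ?thesis using \<pi>(1) by blast
qed

lemma lact_inj:
  assumes A: "is_calg asc" and D: "auf_data asc I e" and G: "proj_generator asc G"
    and eq: "\<forall>x\<in>vcarrier G. lact G a x = lact G b x"
  shows "a = b"
proof -
  have M: "lmodule asc G" using G unfolding proj_generator_def by blast
  obtain J where J: "finite J" "J \<subseteq> I" "\<forall>x\<in>{a, b}. esum e J * x = x \<and> x * esum e J = x"
    using auf_unit[OF D, of "{a, b}"] by blast
  define f where "f = esum e J"
  have fid: "idem f" using esum_idem[OF D J(1,2)] unfolding f_def .
  obtain n \<pi> v where \<pi>: "lhom (dsum_pow G n) (Mf asc f) \<pi>" "v \<in> vcarrier (dsum_pow G n)" "\<pi> v = emb f"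
    using gen_Mf[OF A D G fid] by blast
  have "lact (dsum_pow G n) a v = lact (dsum_pow G n) b v"
    using eq dsum_allC[OF M \<pi>(2)] by auto
  then have "\<pi> (lact (dsum_pow G n) a v) = \<pi> (lact (dsum_pow G n) b v)" by simp
  then have "emb (a * f) = emb (b * f)" using lhomD(4)[OF \<pi>(1) \<pi>(2)] \<pi>(3) by simp
  then show ?thesis using J(3) unfolding f_def by simp
qed

lemma R_add:
  assumes M: "lmodule asc G" and cs: "\<forall>(c, \<phi>, \<xi>)\<in>set cs. \<phi> \<in> dual0 G \<and> \<xi> \<in> vcarrier G"
    and x: "x \<in> vcarrier G" and y: "y \<in> vcarrier G"
  shows "vsum_list G (map (\<lambda>(c, \<phi>, \<xi>). vsc G (c * \<phi> (vadd G x y)) \<xi>) cs)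
       = vadd G (vsum_list G (map (\<lambda>(c, \<phi>, \<xi>). vsc G (c * \<phi> x) \<xi>) cs))
                (vsum_list G (map (\<lambda>(c, \<phi>, \<xi>). vsc G (c * \<phi> y) \<xi>) cs))"
  using cs
proof (induction cs)
  case Nil
  note V = lmoduleD(1)[OF M]
  show ?case using cvsD(1,6)[OF V] by (simp add: vsum_list_def)
next
  case (Cons t cs)
  note V = lmoduleD(1)[OF M]
  obtain c \<phi> \<xi> where t: "t = (c, \<phi>, \<xi>)" by (cases t) auto
  have \<phi>: "\<phi> \<in> dual0 G" and \<xi>: "\<xi> \<in> vcarrier G" using Cons.prems t by auto
  have \<phi>add: "\<phi> (vadd G x y) = \<phi> x + \<phi> y" using \<phi> x y unfolding dual0_def by blast
  have IH: "vsum_list G (map (\<lambda>(c, \<phi>, \<xi>). vsc G (c * \<phi> (vadd G x y)) \<xi>) cs)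
       = vadd G (vsum_list G (map (\<lambda>(c, \<phi>, \<xi>). vsc G (c * \<phi> x) \<xi>) cs))
                (vsum_list G (map (\<lambda>(c, \<phi>, \<xi>). vsc G (c * \<phi> y) \<xi>) cs))"
    using Cons by simp
  have cl: "vsum_list G (map (\<lambda>(c, \<phi>, \<xi>). vsc G (c * \<phi> z) \<xi>) cs) \<in> vcarrier G" for z
    using Cons.prems cvsD(3)[OF V] by (intro vsum_closed[OF V]) auto
  have "vsc G (c * \<phi> (vadd G x y)) \<xi> = vadd G (vsc G (c * \<phi> x) \<xi>) (vsc G (c * \<phi> y) \<xi>)"
    unfolding \<phi>add distrib_left using cvsD(9)[OF V \<xi>] by blast
  then show ?case unfolding t using IH cl cvs_swap4[OF V] cvsD(3)[OF V \<xi>]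
    by (simp add: vsum_list_def)
qed


lemma lact_surj:
  fixes asc :: "complex \<Rightarrow> 'a::ring \<Rightarrow> 'a" and G :: "('a, 'g) lmod"
  assumes A: "is_calg asc" and D: "auf_data asc I e" and G: "proj_generator asc G"
    and T: "T \<in> End0_B G"
  shows "\<exists>a. \<forall>x\<in>vcarrier G. T x = lact G a x"
proof -
  have M: "lmodule asc G" using G unfolding proj_generator_def by blast
  note V = lmoduleD(1)[OF M]
  have comm: "\<And>b x. lhom G G b \<Longrightarrow> x \<in> vcarrier G \<Longrightarrow> T (b x) = b (T x)"
    using T unfolding End0_B_def by blast
  obtain cs where cs: "\<forall>(c, \<phi>, \<xi>)\<in>set cs. \<phi> \<in> dual0 G \<and> \<xi> \<in> vcarrier G"
    and Trep: "\<forall>y\<in>vcarrier G. T y = vsum_list G (map (\<lambda>(c, \<phi>, \<xi>). vsc G (c * \<phi> y) \<xi>) cs)"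
    using T unfolding End0_B_def End0_def by blast
  have TC: "T y \<in> vcarrier G" if "y \<in> vcarrier G" for y
    using Trep that cs cvsD(3)[OF V] by (simp, intro vsum_closed[OF V]) auto
  have Tadd: "T (vadd G x y) = vadd G (T x) (T y)" if "x \<in> vcarrier G" "y \<in> vcarrier G" for x y
    using Trep that R_add[OF M cs that] cvsD(2)[OF V that] by simp
  have T0: "T (vzero G) = vzero G"
  proof -
    have "T (vzero G) = vadd G (T (vzero G)) (T (vzero G))"
      using Tadd[of "vzero G" "vzero G"] cvsD(1,6)[OF V] by simp
    then show ?thesis using cvs_cancel[OF V] TC cvsD(1)[OF V] by metis
  qed
  have exE: "\<forall>t\<in>set cs. \<exists>e'. idem e' \<and> (\<forall>y\<in>vcarrier G. fst (snd t) (lact G e' y) = fst (snd t) y)"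
    using cs unfolding dual0_def by auto
  obtain E where E: "\<forall>t\<in>set cs. idem (E t) \<and> (\<forall>y\<in>vcarrier G. fst (snd t) (lact G (E t) y) = fst (snd t) y)"
    using bchoice[OF exE] by blast
  obtain J where J: "finite J" "J \<subseteq> I" "\<forall>x\<in>E ` set cs. esum e J * x = x \<and> x * esum e J = x"
    using auf_unit[OF D, of "E ` set cs"] by blast
  define f where "f = esum e J"
  have fid: "idem f" using esum_idem[OF D J(1,2)] unfolding f_def .
  have Tf: "T (lact G f y) = T y" if y: "y \<in> vcarrier G" for y
  proof -
    have fyC: "lact G f y \<in> vcarrier G" using y lmoduleD(2)[OF M] by blast
    have meq: "map (\<lambda>(c, \<phi>, \<xi>). vsc G (c * \<phi> (lact G f y)) \<xi>) cs = map (\<lambda>(c, \<phi>, \<xi>). vsc G (c * \<phi> y) \<xi>) cs"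
    proof (intro map_cong refl)
      fix t assume t: "t \<in> set cs"
      obtain c \<phi> \<xi> where tt: "t = (c, \<phi>, \<xi>)" by (cases t) auto
      have Et: "\<forall>y\<in>vcarrier G. \<phi> (lact G (E t) y) = \<phi> y" using E t tt by auto
      have Ef: "E t * f = E t" using J(3) t unfolding f_def by blast
      have "\<phi> (lact G f y) = \<phi> (lact G (E t) (lact G f y))" using Et fyC by simp
      also have "\<dots> = \<phi> (lact G (E t) y)" using lmoduleD(5)[OF M y, of "E t" f] Ef by simp
      also have "\<dots> = \<phi> y" using Et y by simp
      finally show "(case t of (c, \<phi>, \<xi>) \<Rightarrow> vsc G (c * \<phi> (lact G f y)) \<xi>) = (case t of (c, \<phi>, \<xi>) \<Rightarrow> vsc G (c * \<phi> y) \<xi>)"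
        unfolding tt by simp
    qed
    have "T (lact G f y) = vsum_list G (map (\<lambda>(c, \<phi>, \<xi>). vsc G (c * \<phi> (lact G f y)) \<xi>) cs)"
      using Trep fyC by blast
    also have "\<dots> = vsum_list G (map (\<lambda>(c, \<phi>, \<xi>). vsc G (c * \<phi> y) \<xi>) cs)"
      by (rule arg_cong[OF meq])
    also have "\<dots> = T y" using Trep y by simp
    finally show ?thesis .
  qed
  obtain n \<pi> v where \<pi>: "lhom (dsum_pow G n) (Mf asc f) \<pi>" "v \<in> vcarrier (dsum_pow G n)" "\<pi> v = emb f"
    using gen_Mf[OF A D G fid] by blast
  define Tn where "Tn w = (\<lambda>i. if i < n then T (w i) else vzero G)" for w :: "nat \<Rightarrow> 'g"
  have TnC: "Tn w \<in> vcarrier (dsum_pow G n)" if "w \<in> vcarrier (dsum_pow G n)" for w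
    using that TC unfolding Tn_def by auto
  define a where "a = unemb (\<pi> (Tn v))"
  show ?thesis
  proof (intro exI[of _ a] ballI)
    fix g0 assume g0: "g0 \<in> vcarrier G"
    define hh where "hh w = lact G (unemb (\<pi> w)) g0" for w
    have hhC: "hh w \<in> vcarrier G" for w unfolding hh_def using g0 lmoduleD(2)[OF M] by blast
    have hh_add: "hh (vadd (dsum_pow G n) w w') = vadd G (hh w) (hh w')"
      if "w \<in> vcarrier (dsum_pow G n)" "w' \<in> vcarrier (dsum_pow G n)" for w w'
      unfolding hh_def using lhomD(2)[OF \<pi>(1) that] lmoduleD(4)[OF M g0] by simp
    have hh_sc: "hh (vsc (dsum_pow G n) c w) = vsc G c (hh w)"
      if "w \<in> vcarrier (dsum_pow G n)" for w c
      unfolding hh_def using lhomD(3)[OF \<pi>(1) that] lmoduleD(6)[OF M g0] by simp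
    have hh_lact: "hh (lact (dsum_pow G n) d w) = lact G d (hh w)"
      if "w \<in> vcarrier (dsum_pow G n)" for w d
      unfolding hh_def using lhomD(4)[OF \<pi>(1) that] lmoduleD(5)[OF M g0] by simp
    have z_eq: "(\<lambda>i. vzero G) = lact (dsum_pow G n) 0 v"
      using lact_zero_ring[OF M] dsum_allC[OF M \<pi>(2)] by auto
    have hh0: "hh (\<lambda>i. vzero G) = vzero G"
    proof -
      have "hh (\<lambda>i. vzero G) = lact G 0 (hh v)" unfolding z_eq using hh_lact[OF \<pi>(2)] by simp
      then show ?thesis using lact_zero_ring[OF M hhC] by simp
    qed
    define \<iota> where "\<iota> k x = (\<lambda>i::nat. if i = k then x else vzero G)" for k x
    have \<iota>C: "\<iota> k x \<in> vcarrier (dsum_pow G n)" if "k < n" "x \<in> vcarrier G" for k x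
      using that cvsD(1)[OF V] unfolding \<iota>_def by auto
    have \<beta>: "lhom G G (\<lambda>x. hh (\<iota> k x))" if k: "k < n" for k
      unfolding lhom_def
    proof (intro conjI ballI allI)
      fix x assume "x \<in> vcarrier G" then show "hh (\<iota> k x) \<in> vcarrier G" using hhC by blast
    next
      fix x y assume xy: "x \<in> vcarrier G" "y \<in> vcarrier G"
      have "\<iota> k (vadd G x y) = vadd (dsum_pow G n) (\<iota> k x) (\<iota> k y)"
        unfolding \<iota>_def using cvsD(1,6)[OF V] by auto
      then show "hh (\<iota> k (vadd G x y)) = vadd G (hh (\<iota> k x)) (hh (\<iota> k y))"
        using hh_add \<iota>C[OF k xy(1)] \<iota>C[OF k xy(2)] by simp
    next
      fix c x assume x: "x \<in> vcarrier G"
      have "\<iota> k (vsc G c x) = vsc (dsum_pow G n) c (\<iota> k x)"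
        unfolding \<iota>_def using cvs_sc_zero[OF V] by auto
      then show "hh (\<iota> k (vsc G c x)) = vsc G c (hh (\<iota> k x))"
        using hh_sc \<iota>C[OF k x] by simp
    next
      fix d x assume x: "x \<in> vcarrier G"
      have "\<iota> k (lact G d x) = lact (dsum_pow G n) d (\<iota> k x)"
        unfolding \<iota>_def using lact_zero_vec[OF M] by auto
      then show "hh (\<iota> k (lact G d x)) = lact G d (hh (\<iota> k x))"
        using hh_lact \<iota>C[OF k x] by simp
    qed
    define tr where "tr k w = (\<lambda>i. if i < k then w i else vzero G)" for k and w :: "nat \<Rightarrow> 'g"
    have trC: "tr k w \<in> vcarrier (dsum_pow G n)" if "w \<in> vcarrier (dsum_pow G n)" "k \<le> n" for k w
      using that cvsD(1)[OF V] unfolding tr_def by auto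
    have decomp: "tr (Suc k) w = vadd (dsum_pow G n) (tr k w) (\<iota> k (w k))"
      if "w \<in> vcarrier (dsum_pow G n)" "k < n" for k w
    proof
      fix i
      have wi: "w i \<in> vcarrier G" using dsum_allC[OF M that(1)] .
      show "tr (Suc k) w i = vadd (dsum_pow G n) (tr k w) (\<iota> k (w k)) i"
        unfolding tr_def \<iota>_def using wi cvsD(1,6)[OF V] cvs_zero_right[OF V] by auto
    qed
    have Q: "k \<le> n \<longrightarrow> T (hh (tr k w)) = hh (tr k (Tn w))" if w: "w \<in> vcarrier (dsum_pow G n)" for w k
    proof (induction k)
      case 0
      have "tr 0 w = (\<lambda>i. vzero G)" "tr 0 (Tn w) = (\<lambda>i. vzero G)" unfolding tr_def by auto
      then show ?case using hh0 T0 by simp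
    next
      case (Suc k)
      show ?case
      proof
        assume k: "Suc k \<le> n"
        then have kn: "k < n" by simp
        have wk: "w k \<in> vcarrier G" using dsum_allC[OF M w] .
        have "T (hh (tr (Suc k) w)) = T (vadd G (hh (tr k w)) (hh (\<iota> k (w k))))"
          using decomp[OF w kn] hh_add trC[OF w] \<iota>C[OF kn wk] kn by simp
        also have "\<dots> = vadd G (T (hh (tr k w))) (T (hh (\<iota> k (w k))))"
          using Tadd hhC by blast
        also have "\<dots> = vadd G (hh (tr k (Tn w))) (hh (\<iota> k (T (w k))))"
          using Suc.IH kn comm[OF \<beta>[OF kn] wk] by simp
        also have "\<dots> = hh (tr (Suc k) (Tn w))"
        proof -
          have "Tn w k = T (w k)" unfolding Tn_def using kn by simp
          then show ?thesis using decomp[OF TnC[OF w] kn] hh_add trC[OF TnC[OF w]] \<iota>C[OF kn TC[OF wk]] kn by simp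
        qed
        finally show "T (hh (tr (Suc k) w)) = hh (tr (Suc k) (Tn w))" .
      qed
    qed
    have trn: "tr n w = w" if "w \<in> vcarrier (dsum_pow G n)" for w
      using that unfolding tr_def by (auto simp: not_less)
    have "T (hh v) = hh (Tn v)"
      using Q[OF \<pi>(2), of n] trn[OF \<pi>(2)] trn[OF TnC[OF \<pi>(2)]] by simp
    moreover have "hh v = lact G f g0" unfolding hh_def \<pi>(3) by simp
    ultimately show "T g0 = lact G a g0" using Tf[OF g0] unfolding hh_def a_def by simp
  qed
qed

theorem theorem11p7:
  fixes asc :: "complex \<Rightarrow> 'a::ring \<Rightarrow> 'a"
    and G :: "('a, 'g) lmod"
  assumes "is_calg asc"
    and "strongly_AUF asc"
    and "proj_generator asc G"
  shows "(\<forall>a. lact G a \<in> End0_B G)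
    \<and> (\<forall>a b. \<forall>x\<in>vcarrier G. lact G (a + b) x = vadd G (lact G a x) (lact G b x))
    \<and> (\<forall>c a. \<forall>x\<in>vcarrier G. lact G (asc c a) x = vsc G c (lact G a x))
    \<and> (\<forall>a b. (\<forall>x\<in>vcarrier G. lact G a x = lact G b x) \<longrightarrow> a = b)
    \<and> (\<forall>T\<in>End0_B G. \<exists>a. \<forall>x\<in>vcarrier G. T x = lact G a x)"
proof -
  note A = assms(1)
  obtain I e where D: "auf_data asc I e"
    using assms(2) unfolding strongly_AUF_def AUF_iff by blast
  have M: "lmodule asc G" and C: "coherent G" and P: "projective_mod asc G"
    using assms(3) unfolding proj_generator_def by blast+
  have c1: "\<forall>a. lact G a \<in> End0_B G"
  proof
    fix a
    have "\<forall>b. lhom G G b \<longrightarrow> (\<forall>x\<in>vcarrier G. lact G a (b x) = b (lact G a x))"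
      using lhomD(4) by metis
    then show "lact G a \<in> End0_B G"
      unfolding End0_B_def using lact_End0[OF A D M C P, of a] by blast
  qed
  have c2: "\<forall>a b. \<forall>x\<in>vcarrier G. lact G (a + b) x = vadd G (lact G a x) (lact G b x)"
    using lmoduleD(4)[OF M] by blast
  have c3: "\<forall>c a. \<forall>x\<in>vcarrier G. lact G (asc c a) x = vsc G c (lact G a x)"
    using lmoduleD(6)[OF M] by blast
  have c4: "\<forall>a b. (\<forall>x\<in>vcarrier G. lact G a x = lact G b x) \<longrightarrow> a = b"
    using lact_inj[OF A D assms(3)] by blast
  have c5: "\<forall>T\<in>End0_B G. \<exists>a. \<forall>x\<in>vcarrier G. T x = lact G a x"
    using lact_surj[OF A D assms(3)] by blast
  show ?thesis using c1 c2 c3 c4 c5 by blast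
qed

end
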